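(* If $\mathcal{L}$ has finite signature, then the $n$-bisimulation topology $\mathcal{T}_{B}$ is the Stone(-like) topology $\mathcal{T}_{\boldsymbol{\mathcal{L}}_{\Lambda}}$ on $\boldsymbol{X}_{\boldsymbol{\mathcal{L}}_{\Lambda}}$.
   Context: $\mathcal{L}$ is the basic modal language over a countable non-empty set of atoms $\Phi$ and a countable non-empty set of operator indices $\mathcal{I}$ (finite signature: both $\Phi$ and $\mathcal{I}$ finite). $X$ is a set of pointed Kripke models for which modal equivalence and bisimilarity coincide (e.g. image-finite models), and $\Lambda$ is a normal modal logic sound with respect to $X$. $\boldsymbol{X}_{\boldsymbol{\mathcal{L}}_{\Lambda}}$ is the quotient of $X$ under $\Lambda$-equivalence (models identified iff they satisfy the same formulas). The Stone(-like) topology $\mathcal{T}_{\boldsymbol{\mathcal{L}}_{\Lambda}}$ has as basis the sets $\{\boldsymbol{x}\colon x\models\varphi\}$ for $\varphi\in\mathcal{L}$. Writing $x\,\underline{\leftrightarrow}_{n}\,y$ for "$x$ and $y$ are $n$-bisimilar", the $n$-bisimulation metric is $d_{B}(\boldsymbol{x},\boldsymbol{y})=0$ if $x\,\underline{\leftrightarrow}_{n}\,y$ for all $n$, and $d_{B}(\boldsymbol{x},\boldsymbol{y})=\frac{1}{n}$ for the least $n$ with $x$ and $y$ not $n$-bisimilar; the $n$-bisimulation topology $\mathcal{T}_{B}$ is its metric topology, with basis the sets $B_{\boldsymbol{x}n}=\{\boldsymbol{y}\colon y\,\underline{\leftrightarrow}_{n}\,x\}$. *)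

theory Defs
  imports "HOL-Analysis.Analysis"
begin

datatype ('a, 'i) fm =
    Atom 'a
  | Bot
  | Neg "('a, 'i) fm"
  | Conj "('a, 'i) fm" "('a, 'i) fm"
  | Box 'i "('a, 'i) fm"

definition Imp :: "('a, 'i) fm \<Rightarrow> ('a, 'i) fm \<Rightarrow> ('a, 'i) fm" where
  "Imp p q = Neg (Conj p (Neg q))"

text \<open>A Kripke model with worlds of type 'w: one accessibility relation per
index and a valuation of the atoms. A pointed model is a model with a world.\<close>

type_synonym ('a, 'i, 'w) kripke = "('i \<Rightarrow> 'w \<Rightarrow> 'w \<Rightarrow> bool) \<times> ('a \<Rightarrow> 'w \<Rightarrow> bool)"
type_synonym ('a, 'i, 'w) pointed = "('a, 'i, 'w) kripke \<times> 'w"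

fun sem :: "('a, 'i, 'w) kripke \<Rightarrow> 'w \<Rightarrow> ('a, 'i) fm \<Rightarrow> bool" where
  "sem M w (Atom p) = snd M p w"
| "sem M w Bot = False"
| "sem M w (Neg p) = (\<not> sem M w p)"
| "sem M w (Conj p q) = (sem M w p \<and> sem M w q)"
| "sem M w (Box i p) = (\<forall>v. fst M i w v \<longrightarrow> sem M v p)"

definition sat :: "('a, 'i, 'w) pointed \<Rightarrow> ('a, 'i) fm \<Rightarrow> bool" where
  "sat x \<phi> = sem (fst x) (snd x) \<phi>"

definition modal_equiv :: "('a, 'i, 'w) pointed \<Rightarrow> ('a, 'i, 'w) pointed \<Rightarrow> bool" where
  "modal_equiv x y = (\<forall>\<phi>. sat x \<phi> = sat y \<phi>)"

definition bisimulation ::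
  "('a, 'i, 'w) kripke \<Rightarrow> ('a, 'i, 'w) kripke \<Rightarrow> ('w \<Rightarrow> 'w \<Rightarrow> bool) \<Rightarrow> bool" where
  "bisimulation M N Z =
     (\<forall>w v. Z w v \<longrightarrow>
        (\<forall>p. snd M p w = snd N p v) \<and>
        (\<forall>i w'. fst M i w w' \<longrightarrow> (\<exists>v'. fst N i v v' \<and> Z w' v')) \<and>
        (\<forall>i v'. fst N i v v' \<longrightarrow> (\<exists>w'. fst M i w w' \<and> Z w' v')))"

definition bisimilar :: "('a, 'i, 'w) pointed \<Rightarrow> ('a, 'i, 'w) pointed \<Rightarrow> bool" where
  "bisimilar x y = (\<exists>Z. bisimulation (fst x) (fst y) Z \<and> Z (snd x) (snd y))"

fun nbisim_w :: "nat \<Rightarrow> ('a, 'i, 'w) kripke \<Rightarrow> 'w \<Rightarrow> ('a, 'i, 'w) kripke \<Rightarrow> 'w \<Rightarrow> bool" where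
  "nbisim_w 0 M w N v = (\<forall>p. snd M p w = snd N p v)"
| "nbisim_w (Suc n) M w N v =
     ((\<forall>p. snd M p w = snd N p v) \<and>
      (\<forall>i w'. fst M i w w' \<longrightarrow> (\<exists>v'. fst N i v v' \<and> nbisim_w n M w' N v')) \<and>
      (\<forall>i v'. fst N i v v' \<longrightarrow> (\<exists>w'. fst M i w w' \<and> nbisim_w n M w' N v')))"

definition nbisim :: "nat \<Rightarrow> ('a, 'i, 'w) pointed \<Rightarrow> ('a, 'i, 'w) pointed \<Rightarrow> bool" where
  "nbisim n x y = nbisim_w n (fst x) (snd x) (fst y) (snd y)"

text \<open>Propositional evaluation treating atoms and boxed formulas as propositional letters.\<close>
fun peval :: "(('a, 'i) fm \<Rightarrow> bool) \<Rightarrow> ('a, 'i) fm \<Rightarrow> bool" where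
  "peval g (Atom p) = g (Atom p)"
| "peval g Bot = False"
| "peval g (Neg p) = (\<not> peval g p)"
| "peval g (Conj p q) = (peval g p \<and> peval g q)"
| "peval g (Box i p) = g (Box i p)"

definition tautology :: "('a, 'i) fm \<Rightarrow> bool" where
  "tautology \<phi> = (\<forall>g. peval g \<phi>)"

fun subst :: "('a \<Rightarrow> ('a, 'i) fm) \<Rightarrow> ('a, 'i) fm \<Rightarrow> ('a, 'i) fm" where
  "subst s (Atom p) = s p"
| "subst s Bot = Bot"
| "subst s (Neg p) = Neg (subst s p)"
| "subst s (Conj p q) = Conj (subst s p) (subst s q)"
| "subst s (Box i p) = Box i (subst s p)"

definition normal_modal_logic :: "('a, 'i) fm set \<Rightarrow> bool" where
  "normal_modal_logic L =
     ((\<forall>\<phi>. tautology \<phi> \<longrightarrow> \<phi> \<in> L) \<and>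
      (\<forall>i p q. Imp (Box i (Imp p q)) (Imp (Box i p) (Box i q)) \<in> L) \<and>
      (\<forall>p q. p \<in> L \<longrightarrow> Imp p q \<in> L \<longrightarrow> q \<in> L) \<and>
      (\<forall>i p. p \<in> L \<longrightarrow> Box i p \<in> L) \<and>
      (\<forall>s p. p \<in> L \<longrightarrow> subst s p \<in> L))"

definition sound_wrt :: "('a, 'i) fm set \<Rightarrow> ('a, 'i, 'w) pointed set \<Rightarrow> bool" where
  "sound_wrt L X = (\<forall>\<phi>\<in>L. \<forall>x\<in>X. sat x \<phi>)"

definition eq_class :: "('a, 'i, 'w) pointed set \<Rightarrow> ('a, 'i, 'w) pointed \<Rightarrow> ('a, 'i, 'w) pointed set" where
  "eq_class X x = {y \<in> X. \<forall>\<phi>. sat y \<phi> = sat x \<phi>}"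

definition quotient_space :: "('a, 'i, 'w) pointed set \<Rightarrow> ('a, 'i, 'w) pointed set set" where
  "quotient_space X = eq_class X ` X"

definition stone_basic :: "('a, 'i, 'w) pointed set \<Rightarrow> ('a, 'i) fm \<Rightarrow> ('a, 'i, 'w) pointed set set" where
  "stone_basic X \<phi> = {c \<in> quotient_space X. \<exists>x\<in>c. sat x \<phi>}"

definition stone_topology :: "('a, 'i, 'w) pointed set \<Rightarrow> ('a, 'i, 'w) pointed set topology" where
  "stone_topology X = topology_generated_by (range (stone_basic X))"

definition bisim_ball :: "('a, 'i, 'w) pointed set \<Rightarrow> ('a, 'i, 'w) pointed \<Rightarrow> nat \<Rightarrow> ('a, 'i, 'w) pointed set set" where
  "bisim_ball X x n = {c \<in> quotient_space X. \<exists>y\<in>c. nbisim n y x}"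

definition nbisim_topology :: "('a, 'i, 'w) pointed set \<Rightarrow> ('a, 'i, 'w) pointed set topology" where
  "nbisim_topology X = topology_generated_by {bisim_ball X x n | x n. x \<in> X}"

end

theory Submission
  imports Defs
begin

lemma gen_mono:
  assumes "generate_topology_on A s" and "\<And>a. a \<in> A \<Longrightarrow> generate_topology_on B a"
  shows "generate_topology_on B s"
  using assms by (induction rule: generate_topology_on.induct) (auto intro: generate_topology_on.intros)

fun conjs :: "('a, 'i) fm list \<Rightarrow> ('a, 'i) fm" where
  "conjs [] = Neg Bot"
| "conjs (p # ps) = Conj p (conjs ps)"

lemma sem_conjs: "sem M w (conjs xs) = (\<forall>p\<in>set xs. sem M w p)"
  by (induction xs) auto

definition CS :: "('a, 'i) fm set \<Rightarrow> ('a, 'i) fm" where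
  "CS S = conjs (SOME xs. set xs = S)"

definition DS :: "('a, 'i) fm set \<Rightarrow> ('a, 'i) fm" where
  "DS S = Neg (CS (Neg ` S))"

lemma sem_CS: "finite S \<Longrightarrow> sem M w (CS S) = (\<forall>p\<in>S. sem M w p)"
  unfolding CS_def sem_conjs
  by (metis (mono_tags, lifting) finite_list someI_ex)

lemma sem_DS: "finite S \<Longrightarrow> sem M w (DS S) = (\<exists>p\<in>S. sem M w p)"
  unfolding DS_def by (simp add: sem_CS)

definition Dia :: "'i \<Rightarrow> ('a, 'i) fm \<Rightarrow> ('a, 'i) fm" where
  "Dia i p = Neg (Box i (Neg p))"

definition chi0 :: "('a \<Rightarrow> bool) \<Rightarrow> ('a, 'i) fm" where
  "chi0 V = CS (range (\<lambda>p. if V p then Atom p else Neg (Atom p)))"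

definition chiS :: "('a \<Rightarrow> bool) \<Rightarrow> ('i \<Rightarrow> ('a, 'i) fm set) \<Rightarrow> ('a, 'i) fm" where
  "chiS V T = Conj (chi0 V) (CS (range (\<lambda>i. Conj (CS (Dia i ` T i)) (Box i (DS (T i))))))"

fun chi :: "nat \<Rightarrow> ('a, 'i, 'w) kripke \<Rightarrow> 'w \<Rightarrow> ('a, 'i) fm" where
  "chi 0 M w = chi0 (\<lambda>p. snd M p w)"
| "chi (Suc n) M w = chiS (\<lambda>p. snd M p w) (\<lambda>i. {chi n M v | v. fst M i w v})"

lemma fin_funs:
  assumes "finite (UNIV :: 'a set)" "finite S"
  shows "finite {f :: 'a \<Rightarrow> 'b. \<forall>x. f x \<in> S}"
proof -
  have "{f :: 'a \<Rightarrow> 'b. \<forall>x. f x \<in> S} \<subseteq> {f. \<forall>x. (x \<in> UNIV \<longrightarrow> f x \<in> S) \<and> (x \<notin> UNIV \<longrightarrow> f x = undefined)}"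
    by auto
  then show ?thesis using finite_set_of_finite_funs[OF assms] finite_subset by blast
qed

lemma chi_in_range: "chi n (M :: ('a, 'i, 'w) kripke) v \<in> range (\<lambda>(M' :: ('a, 'i, 'w) kripke, w). chi n M' w)"
  using rangeI[of "\<lambda>(M, w). chi n M w" "(M, v)"] by simp

lemma fin_chi:
  assumes "finite (UNIV :: 'a set)" "finite (UNIV :: 'i set)"
  shows "finite (range (\<lambda>(M :: ('a, 'i, 'w) kripke, w). chi n M w))"
proof (induction n)
  case 0
  have "range (\<lambda>(M :: ('a, 'i, 'w) kripke, w). chi 0 M w) \<subseteq> chi0 ` {V. \<forall>x. V x \<in> (UNIV :: bool set)}"
    by auto
  moreover have "finite {V :: 'a \<Rightarrow> bool. \<forall>x. V x \<in> (UNIV :: bool set)}"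
    by (rule fin_funs[OF assms(1)]) simp
  ultimately show ?case using finite_subset by blast
next
  case (Suc n)
  let ?S = "range (\<lambda>(M :: ('a, 'i, 'w) kripke, w). chi n M w)"
  let ?P = "{V :: 'a \<Rightarrow> bool. \<forall>x. V x \<in> UNIV} \<times> {T :: 'i \<Rightarrow> _. \<forall>i. T i \<in> Pow ?S}"
  have "range (\<lambda>(M :: ('a, 'i, 'w) kripke, w). chi (Suc n) M w) \<subseteq> (\<lambda>(V, T). chiS V T) ` ?P"
  proof
    fix f assume "f \<in> range (\<lambda>(M :: ('a, 'i, 'w) kripke, w). chi (Suc n) M w)"
    then obtain M w where f: "f = chi (Suc n) (M :: ('a, 'i, 'w) kripke) w" by auto
    have "((\<lambda>p. snd M p w), (\<lambda>i. {chi n M v | v. fst M i w v})) \<in> ?P"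
      using chi_in_range by blast
    then show "f \<in> (\<lambda>(V, T). chiS V T) ` ?P" unfolding f by force
  qed
  moreover have "finite ?P"
    by (rule finite_cartesian_product; rule fin_funs) (use assms Suc in auto)
  ultimately show ?case using finite_subset by blast
qed

lemma sem_chi0:
  assumes "finite (UNIV :: 'a set)"
  shows "sem N u (chi0 (V :: 'a \<Rightarrow> bool) :: ('a, 'i) fm) = (\<forall>p. snd N p u = V p)"
proof -
  have f0: "finite (range (\<lambda>p. if V p then Atom p else (Neg (Atom p) :: ('a, 'i) fm)))"
    by (rule finite_imageI[OF assms])
  have "sem N u (chi0 V :: ('a, 'i) fm) = (\<forall>p. sem N u (if V p then Atom p else (Neg (Atom p) :: ('a, 'i) fm)))"
    unfolding chi0_def sem_CS[OF f0] by blast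
  also have "\<dots> = (\<forall>p. snd N p u = V p)"
    by (simp split: if_split) blast
  finally show ?thesis .
qed

lemma sem_chiS:
  assumes "finite (UNIV :: 'a set)" "finite (UNIV :: 'i set)" "\<And>i. finite (T i)"
  shows "sem N u (chiS (V :: 'a \<Rightarrow> bool) (T :: 'i \<Rightarrow> ('a, 'i) fm set)) =
     ((\<forall>p. snd N p u = V p) \<and>
      (\<forall>i. (\<forall>t\<in>T i. \<exists>u'. fst N i u u' \<and> sem N u' t) \<and> (\<forall>u'. fst N i u u' \<longrightarrow> (\<exists>t\<in>T i. sem N u' t))))"
proof -
  have f1: "finite (range (\<lambda>i. Conj (CS (Dia i ` T i)) (Box i (DS (T i)))))"
    using assms(2) by simp
  have e: "sem N u (Conj (CS (Dia i ` T i)) (Box i (DS (T i)))) =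
     ((\<forall>t\<in>T i. \<exists>u'. fst N i u u' \<and> sem N u' t) \<and> (\<forall>u'. fst N i u u' \<longrightarrow> (\<exists>t\<in>T i. sem N u' t)))" for i
    using assms(3)[of i] by (simp add: sem_CS sem_DS Dia_def)
  show ?thesis
    unfolding chiS_def sem.simps sem_chi0[OF assms(1)] sem_CS[OF f1] using e by simp
qed

lemma sem_chi:
  assumes "finite (UNIV :: 'a set)" "finite (UNIV :: 'i set)"
  shows "sem N u (chi n (M :: ('a, 'i, 'w) kripke) w) = nbisim_w n N u M w"
proof (induction n arbitrary: u w)
  case 0
  then show ?case by (simp add: sem_chi0[OF assms(1)])
next
  case (Suc n)
  define T where "T = (\<lambda>i. {chi n M v | v. fst M i w v})"
  have fT: "finite (T i)" for i
    unfolding T_def using fin_chi[OF assms, of n] by (rule rev_finite_subset) (use chi_in_range in blast)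
  have "sem N u (chi (Suc n) M w) =
     ((\<forall>p. snd N p u = snd M p w) \<and>
      (\<forall>i. (\<forall>t\<in>T i. \<exists>u'. fst N i u u' \<and> sem N u' t) \<and> (\<forall>u'. fst N i u u' \<longrightarrow> (\<exists>t\<in>T i. sem N u' t))))"
    unfolding chi.simps T_def[symmetric] sem_chiS[OF assms fT] ..
  also have "\<dots> = nbisim_w (Suc n) N u M w"
  proof -
    have "(\<forall>t\<in>T i. \<exists>u'. fst N i u u' \<and> sem N u' t) = (\<forall>v. fst M i w v \<longrightarrow> (\<exists>u'. fst N i u u' \<and> nbisim_w n N u' M v))" for i
      unfolding T_def Suc[symmetric] by blast
    moreover have "(\<forall>u'. fst N i u u' \<longrightarrow> (\<exists>t\<in>T i. sem N u' t)) = (\<forall>u'. fst N i u u' \<longrightarrow> (\<exists>v. fst M i w v \<and> nbisim_w n N u' M v))" for i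
      unfolding T_def Suc[symmetric] by blast
    ultimately show ?thesis unfolding nbisim_w.simps by blast
  qed
  finally show ?case .
qed

fun depth :: "('a, 'i) fm \<Rightarrow> nat" where
  "depth (Atom p) = 0"
| "depth Bot = 0"
| "depth (Neg p) = depth p"
| "depth (Conj p q) = max (depth p) (depth q)"
| "depth (Box i p) = Suc (depth p)"

lemma nbisim_w_atoms: "nbisim_w n M w N v \<Longrightarrow> snd M p w = snd N p v"
  by (cases n) auto

lemma invariance:
  "depth \<phi> \<le> n \<Longrightarrow> nbisim_w n M w N v \<Longrightarrow> sem M w \<phi> = sem N v \<phi>"
proof (induction \<phi> arbitrary: n w v)
  case (Atom p) then show ?case by (simp add: nbisim_w_atoms)
next
  case (Box i p)
  then obtain m where m: "n = Suc m" "depth p \<le> m" by (cases n) auto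
  show ?case
  proof
    assume "sem M w (Box i p)"
    then show "sem N v (Box i p)" using Box.prems(2) Box.IH[OF m(2)] m(1) by fastforce
  next
    assume "sem N v (Box i p)"
    then show "sem M w (Box i p)" using Box.prems(2) Box.IH[OF m(2)] m(1) by fastforce
  qed
qed auto

lemma nbisim_refl: "nbisim_w n M w M w"
  by (induction n arbitrary: w) auto

theorem corollary27:
  fixes X :: "('a, 'i, 'w) pointed set" and \<Lambda> :: "('a, 'i) fm set"
  assumes "finite (UNIV :: 'a set)" and "finite (UNIV :: 'i set)"
    and "\<forall>x\<in>X. \<forall>y\<in>X. modal_equiv x y \<longleftrightarrow> bisimilar x y"
    and "normal_modal_logic \<Lambda>" and "sound_wrt \<Lambda> X"
  shows "nbisim_topology X = stone_topology X"
proof -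
  have ball: "bisim_ball X x n = stone_basic X (chi n (fst x) (snd x))" for x n
    unfolding bisim_ball_def stone_basic_def nbisim_def sat_def
    by (simp add: sem_chi[OF assms(1,2)])
  have sb: "stone_basic X \<phi> = \<Union> {bisim_ball X x (depth \<phi>) | x. x \<in> X \<and> sat x \<phi>}" for \<phi>
  proof safe
    fix c assume c: "c \<in> stone_basic X \<phi>"
    then obtain y where y: "y \<in> c" "sat y \<phi>" unfolding stone_basic_def by auto
    have "y \<in> X" using c y unfolding stone_basic_def quotient_space_def eq_class_def by auto
    moreover have "c \<in> bisim_ball X y (depth \<phi>)"
      using c y unfolding stone_basic_def bisim_ball_def nbisim_def by (auto intro: nbisim_refl)
    ultimately show "c \<in> \<Union> {bisim_ball X x (depth \<phi>) | x. x \<in> X \<and> sat x \<phi>}" using y by blast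
  next
    fix c x assume "c \<in> bisim_ball X x (depth \<phi>)" "x \<in> X" "sat x \<phi>"
    then obtain y where "y \<in> c" "nbisim (depth \<phi>) y x" "c \<in> quotient_space X"
      unfolding bisim_ball_def by auto
    moreover have "sat y \<phi>"
      using invariance[of \<phi> "depth \<phi>" "fst y" "snd y" "fst x" "snd x"] \<open>sat x \<phi>\<close>
        \<open>nbisim (depth \<phi>) y x\<close>
      unfolding nbisim_def sat_def by simp
    ultimately show "c \<in> stone_basic X \<phi>"
      unfolding stone_basic_def by auto
  qed
  have A: "generate_topology_on (range (stone_basic X)) a"
    if "a \<in> {bisim_ball X x n | x n. x \<in> X}" for a
    using that ball by (auto intro: generate_topology_on.Basis)
  have B: "generate_topology_on {bisim_ball X x n | x n. x \<in> X} a"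
    if ar: "a \<in> range (stone_basic X)" for a
  proof -
    obtain \<phi> where a: "a = stone_basic X \<phi>" using ar by auto
    show ?thesis unfolding a sb
    proof (rule generate_topology_on.UN)
      fix k assume "k \<in> {bisim_ball X x (depth \<phi>) | x. x \<in> X \<and> sat x \<phi>}"
      then obtain x where "x \<in> X" "k = bisim_ball X x (depth \<phi>)" by blast
      then show "generate_topology_on {bisim_ball X x n | x n. x \<in> X} k"
        by (intro generate_topology_on.Basis) blast
    qed
  qed
  show ?thesis
    unfolding nbisim_topology_def stone_topology_def
  proof (rule topology_eq[THEN iffD2], intro allI iffI)
    fix S
    assume "openin (topology_generated_by {bisim_ball X x n | x n. x \<in> X}) S"
    then show "openin (topology_generated_by (range (stone_basic X))) S"
      unfolding openin_topology_generated_by_iff by (rule gen_mono) (rule A)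
  next
    fix S
    assume "openin (topology_generated_by (range (stone_basic X))) S"
    then show "openin (topology_generated_by {bisim_ball X x n | x n. x \<in> X}) S"
      unfolding openin_topology_generated_by_iff by (rule gen_mono) (rule B)
  qed
qed

end
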